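(* Let $T:X\to X$ be a map with $\mathcal F_T(n)=|\{x\in X: T^nx=x\}|<\infty$ for all $n\ge1$. Let $m\ge1$ have prime factorization $m=p_1^{a_1}\cdots p_r^{a_r}$, let $n\ge1$, and let $J=\mathcal D(m)\setminus\mathcal D(n)$, where $\mathcal D(k)$ denotes the set of prime divisors of $k$. Write $\boldsymbol p_J^{\boldsymbol a_J}=\prod_{p_j\in J}p_j^{a_j}$. Then \[ \mathcal O_{T^m}(n)=\sum_{d\mid \boldsymbol p_J^{\boldsymbol a_J}}\frac{m}{d}\,\mathcal O_T\!\left(\frac{mn}{d}\right), \] where $T^m$ is the $m$th iterate of $T$.
   Context: For a map $S:X\to X$, a closed orbit of length $n$ is a set $\{x,Sx,\dots,S^{n-1}x\}$ with $S^nx=x$ having exactly $n$ elements; $\mathcal O_S(n)$ denotes the number of closed orbits of length $n$ under $S$. *)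

theory Defs
  imports "HOL-Computational_Algebra.Computational_Algebra"
begin

definition closed_orbits :: "('a \<Rightarrow> 'a) \<Rightarrow> nat \<Rightarrow> 'a set set" where
  "closed_orbits S n = {{(S ^^ k) x | k. k < n} | x.
      (S ^^ n) x = x \<and> card {(S ^^ k) x | k. k < n} = n}"

definition orbit_count :: "('a \<Rightarrow> 'a) \<Rightarrow> nat \<Rightarrow> nat" where
  "orbit_count S n = card (closed_orbits S n)"

definition fixed_points :: "('a \<Rightarrow> 'a) \<Rightarrow> nat \<Rightarrow> 'a set" where
  "fixed_points T n = {x. (T ^^ n) x = x}"

end

theory Submission
  imports Defs
begin



definition per :: "('a \<Rightarrow> 'a) \<Rightarrow> nat \<Rightarrow> 'a \<Rightarrow> bool" where
  "per S n x \<longleftrightarrow> n > 0 \<and> (\<forall>j. (S ^^ j) x = x \<longleftrightarrow> n dvd j)"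

lemma funpow_mult_fix: "(S ^^ n) x = x \<Longrightarrow> (S ^^ (n * i)) x = x"
  by (induction i) (simp_all add: funpow_add)

lemma per_alt:
  "per S n x \<longleftrightarrow> n > 0 \<and> (S ^^ n) x = x \<and> (\<forall>j. 0 < j \<and> j < n \<longrightarrow> (S ^^ j) x \<noteq> x)"
proof
  show "per S n x \<Longrightarrow> n > 0 \<and> (S ^^ n) x = x \<and> (\<forall>j. 0 < j \<and> j < n \<longrightarrow> (S ^^ j) x \<noteq> x)"
  proof (intro conjI allI impI)
    assume p: "per S n x"
    show "n > 0" using p unfolding per_def by simp
    show "(S ^^ n) x = x" using p unfolding per_def by simp
    fix j assume j: "0 < j \<and> j < n"
    then have "\<not> n dvd j" using nat_dvd_not_less by blast
    then show "(S ^^ j) x \<noteq> x" using p unfolding per_def by simp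
  qed
next
  assume h: "n > 0 \<and> (S ^^ n) x = x \<and> (\<forall>j. 0 < j \<and> j < n \<longrightarrow> (S ^^ j) x \<noteq> x)"
  show "per S n x" unfolding per_def
  proof (intro conjI allI iffI)
    fix j assume "(S ^^ j) x = x"
    then have "(S ^^ (j mod n)) x = x" using funpow_mod_eq[where f=S and n=n and x=x and m=j] h by simp
    then have "j mod n = 0" using h by (metis mod_less_divisor neq0_conv)
    then show "n dvd j" by auto
  next
    fix j assume "n dvd j" then obtain i where "j = n * i" by auto
    then show "(S ^^ j) x = x" using h funpow_mult_fix by metis
  qed (use h in auto)
qed

lemma per_unique: "per S k x \<Longrightarrow> per S k' x \<Longrightarrow> k = k'"
proof -
  assume a: "per S k x" "per S k' x"
  have "(S ^^ k) x = x" using a(1) unfolding per_def by simp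
  have "(S ^^ k') x = x" using a(2) unfolding per_def by simp
  have "k' dvd k" using a(2) \<open>(S ^^ k) x = x\<close> unfolding per_def by simp
  moreover have "k dvd k'" using a(1) \<open>(S ^^ k') x = x\<close> unfolding per_def by simp
  ultimately have "k' dvd k" "k dvd k'" by auto
  then show "k = k'" by (rule dvd_antisym[rotated])
qed

lemma per_exists:
  assumes "N > 0" "(S ^^ N) x = x" shows "\<exists>k. per S k x"
proof -
  define P where "P = (\<lambda>k. 0 < k \<and> (S ^^ k) x = x)"
  define k where "k = (LEAST k. P k)"
  have k: "P k" unfolding k_def by (rule LeastI[where k=N]) (use assms in \<open>simp add: P_def\<close>)
  have "\<not> P j" if "j < k" for j using not_less_Least[of j P] that unfolding k_def by simp
  then have "per S k x" unfolding per_alt using k unfolding P_def by auto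
  then show ?thesis ..
qed

lemma fp: "(S ^^ a) ((S ^^ b) z) = (S ^^ (a + b)) z" by (simp add: funpow_add)

definition orbU :: "('a \<Rightarrow> 'a) \<Rightarrow> 'a \<Rightarrow> 'a set" where
  "orbU S x = range (\<lambda>k. (S ^^ k) x)"

lemma orb_eq:
  assumes "n > 0" "(S ^^ n) x = x"
  shows "{(S ^^ k) x | k. k < n} = orbU S x"
  unfolding orbU_def
  using assms funpow_mod_eq[where f=S and n=n and x=x] by (auto intro!: exI[of _ "_ mod n"])

lemma orbU_mem:
  assumes "n > 0" "(S ^^ n) x = x" "y \<in> orbU S x"
  shows "orbU S y = orbU S x"
proof -
  obtain i where y: "y = (S ^^ i) x" using assms(3) unfolding orbU_def by auto
  have "orbU S y \<subseteq> orbU S x" unfolding orbU_def y by (auto simp: fp)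
  moreover have "orbU S x \<subseteq> orbU S y"
  proof
    fix z assume "z \<in> orbU S x"
    then obtain j where z: "z = (S ^^ j) x" unfolding orbU_def by auto
    have e: "j + n * i - i + i = j + n * i" using assms(1) by (simp add: trans_le_add2)
    have "(S ^^ (j + n * i - i)) y = (S ^^ (j + n * i)) x"
      unfolding y fp e ..
    also have "\<dots> = z" using funpow_mult_fix[OF assms(2), of i] z by (simp add: funpow_add)
    finally show "z \<in> orbU S y" unfolding orbU_def by (metis rangeI)
  qed
  ultimately show ?thesis by blast
qed

lemma per_orbU:
  assumes "per S n x" "y \<in> orbU S x" shows "per S n y"
proof -
  have n: "n > 0" "(S ^^ n) x = x" using assms(1) unfolding per_alt by auto
  obtain i where y: "y = (S ^^ i) x" using assms(2) unfolding orbU_def by auto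
  have "x \<in> orbU S x" unfolding orbU_def by (metis funpow_0 rangeI)
  then have x: "x \<in> orbU S y" using orbU_mem[OF n assms(2)] by simp
  then obtain i' where x': "x = (S ^^ i') y" unfolding orbU_def by auto
  have "(S ^^ j) y = y \<longleftrightarrow> (S ^^ j) x = x" for j
  proof
    assume "(S ^^ j) y = y"
    then have "(S ^^ i') ((S ^^ j) y) = x" using x' by simp
    then have "(S ^^ j) ((S ^^ i') y) = x" by (simp only: fp add.commute)
    then show "(S ^^ j) x = x" using x' by simp
  next
    assume "(S ^^ j) x = x"
    then have "(S ^^ i) ((S ^^ j) x) = y" using y by simp
    then have "(S ^^ j) ((S ^^ i) x) = y" by (simp only: fp add.commute)
    then show "(S ^^ j) y = y" using y by simp
  qed
  then show ?thesis using assms(1) unfolding per_def by simp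
qed


lemma orb_img: "{(S ^^ k) x | k. k < n} = (\<lambda>k. (S ^^ k) x) ` {..<n}" by auto

lemma per_card:
  assumes "per S n x" shows "card {(S ^^ k) x | k. k < n} = n"
proof -
  have h: "n > 0" "(S ^^ n) x = x" "\<forall>j. 0 < j \<and> j < n \<longrightarrow> (S ^^ j) x \<noteq> x"
    using assms unfolding per_alt by auto
  have "inj_on (\<lambda>k. (S ^^ k) x) {..<n}"
  proof (rule inj_onI, rule ccontr)
    fix a b assume ab: "a \<in> {..<n}" "b \<in> {..<n}" "(S ^^ a) x = (S ^^ b) x" "a \<noteq> b"
    have *: "(S ^^ (n - b + a)) x = x" if "a < b" "b < n" "(S ^^ a) x = (S ^^ b) x" for a b
    proof -
      have "(S ^^ (n - b + a)) x = (S ^^ (n - b)) ((S ^^ a) x)" by (simp only: fp)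
      also have "\<dots> = (S ^^ (n - b)) ((S ^^ b) x)" using that by simp
      also have "\<dots> = (S ^^ (n - b + b)) x" by (simp only: fp)
      also have "\<dots> = x" using that h by simp
      finally show ?thesis .
    qed
    show False
    proof (cases "a < b")
      case True
      have "0 < n - b + a \<and> n - b + a < n" using True ab by auto
      then show False using *[of a b] ab h(3)[rule_format, of "n - b + a"] True by auto
    next
      case False
      then have "b < a" using ab by auto
      have "0 < n - a + b \<and> n - a + b < n" using \<open>b < a\<close> ab by auto
      then show False using *[of b a] ab h(3)[rule_format, of "n - a + b"] \<open>b < a\<close> by auto
    qed
  qed
  then show ?thesis unfolding orb_img by (simp add: card_image)
qed

lemma closed_orbits_eq:
  assumes "n > 0" shows "closed_orbits S n = orbU S ` {x. per S n x}"
proof (intro set_eqI iffI)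
  fix A assume "A \<in> closed_orbits S n"
  then obtain x where x: "A = {(S ^^ k) x | k. k < n}" "(S ^^ n) x = x" "card {(S ^^ k) x | k. k < n} = n"
    unfolding closed_orbits_def by auto
  have "per S n x" unfolding per_alt
  proof (intro conjI allI impI assms x(2), rule notI)
    fix j assume j: "0 < j \<and> j < n" "(S ^^ j) x = x"
    have "card {(S ^^ k) x | k. k < n} = card {(S ^^ k) x | k. k < j}"
      using orb_eq[OF assms x(2)] orb_eq[of j S x] j by simp
    also have "\<dots> \<le> j" unfolding orb_img by (metis card_image_le card_lessThan finite_lessThan)
    finally show False using x(3) j by simp
  qed
  then show "A \<in> orbU S ` {x. per S n x}" using x orb_eq[OF assms x(2)] by auto
next
  fix A assume "A \<in> orbU S ` {x. per S n x}"
  then obtain x where x: "A = orbU S x" "per S n x" by auto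
  have "(S ^^ n) x = x" using x(2) unfolding per_alt by auto
  then show "A \<in> closed_orbits S n" unfolding closed_orbits_def
    using x orb_eq[OF assms, of S x] per_card[OF x(2)] \<open>(S ^^ n) x = x\<close> by (auto intro!: exI[of _ x])
qed

lemma per_fix: "per S n x \<Longrightarrow> (S ^^ n) x = x"
  unfolding per_def by simp

lemma count_per:
  assumes "n > 0" "finite {x. per S n x}"
  shows "n * orbit_count S n = card {x. per S n x}"
proof -
  have xin: "x \<in> orbU S x" for x unfolding orbU_def by (metis funpow_0 rangeI)
  have U: "\<Union>(orbU S ` {x. per S n x}) = {x. per S n x}"
  proof (rule set_eqI)
    fix y show "y \<in> \<Union>(orbU S ` {x. per S n x}) \<longleftrightarrow> y \<in> {x. per S n x}"
    proof
      assume "y \<in> \<Union>(orbU S ` {x. per S n x})"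
      then obtain x where "per S n x" "y \<in> orbU S x" by auto
      then show "y \<in> {x. per S n x}" using per_orbU by simp
    next
      assume "y \<in> {x. per S n x}"
      then have "orbU S y \<in> orbU S ` {x. per S n x}" by simp
      then show "y \<in> \<Union>(orbU S ` {x. per S n x})" using xin[of y] by (rule UnionI)
    qed
  qed
  have cd: "card (orbU S x) = n" if "per S n x" for x
  proof -
    have "(S ^^ n) x = x" using that by (rule per_fix)
    then show ?thesis using per_card[OF that] orb_eq[OF assms(1) \<open>(S ^^ n) x = x\<close>] by simp
  qed
  have "n * card (orbU S ` {x. per S n x}) = card (\<Union>(orbU S ` {x. per S n x}))"
  proof (rule card_partition)
    show "finite (orbU S ` {x. per S n x})" using assms by simp
    show "finite (\<Union>(orbU S ` {x. per S n x}))" using U assms by simp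
    show "card c = n" if "c \<in> orbU S ` {x. per S n x}" for c using cd that by blast
    show "c1 \<inter> c2 = {}" if c: "c1 \<in> orbU S ` {x. per S n x}" "c2 \<in> orbU S ` {x. per S n x}" "c1 \<noteq> c2" for c1 c2
    proof -
      obtain x where x: "per S n x" "c1 = orbU S x" using c(1) by blast
      obtain y where y: "per S n y" "c2 = orbU S y" using c(2) by blast
      show "c1 \<inter> c2 = {}"
      proof (rule ccontr)
        assume "c1 \<inter> c2 \<noteq> {}"
        then obtain z where z: "z \<in> orbU S x" "z \<in> orbU S y" using x y by blast
        have "orbU S z = orbU S x" using orbU_mem[OF assms(1) per_fix[OF x(1)] z(1)] .
        moreover have "orbU S z = orbU S y" using orbU_mem[OF assms(1) per_fix[OF y(1)] z(2)] .
        ultimately show False using c(3) x y by simp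
      qed
    qed
  qed
  then show ?thesis unfolding orbit_count_def closed_orbits_eq[OF assms(1)] U .
qed

lemma NT1:
  fixes k m n :: nat
  assumes "k > 0" "m > 0" "n > 0"
  shows "(\<forall>j. k dvd m * j \<longleftrightarrow> n dvd j) \<longleftrightarrow> (\<exists>d. d dvd m \<and> coprime d n \<and> k = (m div d) * n)"
proof
  assume h: "\<forall>j. k dvd m * j \<longleftrightarrow> n dvd j"
  obtain k' m' where g0: "k = k' * gcd k m" "m = m' * gcd k m" "coprime k' m'"
  proof -
    have "gcd k m \<noteq> 0" using assms by simp
    then show ?thesis using gcd_coprime_exists[of k m] that by blast
  qed
  define g where "g = gcd k m"
  have g: "k = g * k'" "m = g * m'" "coprime k' m'" "g > 0"
    using g0 assms unfolding g_def by (auto simp: mult.commute)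
  have "k dvd m * j \<longleftrightarrow> k' dvd j" for j
  proof -
    have "k dvd m * j \<longleftrightarrow> k' dvd m' * j" using g by (simp add: mult.assoc)
    also have "\<dots> \<longleftrightarrow> k' dvd j" using g(3) by (simp add: coprime_dvd_mult_right_iff)
    finally show ?thesis .
  qed
  then have "\<forall>j. k' dvd j \<longleftrightarrow> n dvd j" using h by simp
  then have kn: "k' = n" by (meson dvd_antisym dvd_refl)
  show "\<exists>d. d dvd m \<and> coprime d n \<and> k = (m div d) * n"
  proof (intro exI conjI)
    show "m' dvd m" using g by simp
    show "coprime m' n" using g kn by (simp add: coprime_commute)
    have "m' > 0" using g assms by auto
    then show "k = (m div m') * n" using g kn by simp
  qed
next
  assume "\<exists>d. d dvd m \<and> coprime d n \<and> k = (m div d) * n"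
  then obtain d where d: "d dvd m" "coprime d n" "k = (m div d) * n" by auto
  obtain e where e: "m = d * e" using d by auto
  have "e > 0" "d > 0" using e assms by auto
  then have k: "k = e * n" using d e by simp
  show "\<forall>j. k dvd m * j \<longleftrightarrow> n dvd j"
  proof
    fix j
    have "k dvd m * j \<longleftrightarrow> n dvd d * j" using k e \<open>e > 0\<close> by (simp add: mult.assoc mult.left_commute)
    also have "\<dots> \<longleftrightarrow> n dvd j" using d(2) by (simp add: coprime_commute coprime_dvd_mult_right_iff)
    finally show "k dvd m * j \<longleftrightarrow> n dvd j" .
  qed
qed

lemma NT2:
  fixes m n d :: nat
  assumes "m > 0" "n > 0"
  shows "d dvd (\<Prod>p \<in> prime_factors m - prime_factors n. p ^ multiplicity p m) \<longleftrightarrow> d dvd m \<and> coprime d n"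
    (is "d dvd ?P \<longleftrightarrow> _")
proof -
  have mP: "multiplicity p ?P = (if p \<in> prime_factors m - prime_factors n then multiplicity p m else 0)"
    if "prime p" for p
    by (rule multiplicity_prod_prime_powers) (auto simp: that)
  have P0: "?P \<noteq> 0" by (auto simp: in_prime_factors_iff)
  show ?thesis
  proof
    assume dP: "d dvd ?P"
    have "?P dvd m"
      by (rule multiplicity_le_imp_dvd[OF P0]) (simp add: mP)
    then have "d dvd m" using dP by (metis dvd_trans)
    moreover have "coprime d n"
    proof (rule ccontr)
      assume nc: "\<not> coprime d n"
      then have "gcd d n \<noteq> 1" by (simp add: coprime_iff_gcd_eq_1)
      then obtain p :: nat where "prime p" "p dvd gcd d n" using prime_factor_nat by blast
      then have p: "prime p" "p dvd d" "p dvd n" by auto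
      have d0: "d \<noteq> 0" using dP P0 by (metis dvd_0_left_iff)
      have "multiplicity p d > 0" using p d0 by (simp add: prime_multiplicity_gt_zero_iff)
      moreover have "multiplicity p d \<le> multiplicity p ?P" using dvd_imp_multiplicity_le[OF dP P0] .
      ultimately have "p \<notin> prime_factors n" using mP[OF p(1)] by (auto split: if_splits)
      then show False using p assms by (auto simp: in_prime_factors_iff)
    qed
    ultimately show "d dvd m \<and> coprime d n" ..
  next
    assume h: "d dvd m \<and> coprime d n"
    have d0: "d \<noteq> 0" using h assms by auto
    show "d dvd ?P"
    proof (rule multiplicity_le_imp_dvd[OF d0])
      fix p :: nat assume p: "prime p"
      show "multiplicity p d \<le> multiplicity p ?P"
      proof (cases "p dvd d")
        case True
        have "p dvd m" using True h by (rule dvd_trans[OF _ conjunct1])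
        moreover have "\<not> p dvd n" using True h p
          by (meson coprime_common_divisor not_prime_unit)
        ultimately have "p \<in> prime_factors m - prime_factors n" using p assms
          by (auto simp: in_prime_factors_iff)
        then show ?thesis using mP[OF p] dvd_imp_multiplicity_le[of d m p] h assms by auto
      next
        case False
        then show ?thesis by (simp add: not_dvd_imp_multiplicity_0)
      qed
    qed
  qed
qed


lemma ddself: "(i::nat) dvd m \<Longrightarrow> m > 0 \<Longrightarrow> m div (m div i) = i"
  by (auto elim!: dvdE)

lemma per_pow:
  assumes "per T k x"
  shows "per (T ^^ m) n x \<longleftrightarrow> n > 0 \<and> (\<forall>j. k dvd m * j \<longleftrightarrow> n dvd j)"
  using assms unfolding per_def by (simp add: funpow_mult)

theorem theorem2p1:
  fixes T :: "'a \<Rightarrow> 'a" and m n :: nat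
  assumes fin: "\<And>k. k \<ge> 1 \<Longrightarrow> finite (fixed_points T k)"
    and m: "m \<ge> 1" and n: "n \<ge> 1"
  shows "orbit_count (T ^^ m) n =
    (\<Sum>d \<in> {d. d dvd (\<Prod>p \<in> prime_factors m - prime_factors n. p ^ multiplicity p m)}.
        (m div d) * orbit_count T (m * n div d))"
proof -
  define P where "P = (\<Prod>p \<in> prime_factors m - prime_factors n. p ^ multiplicity p m)"
  define D where "D = {d. d dvd P}"
  have m0: "m > 0" and n0: "n > 0" using m n by auto
  have DD: "d \<in> D \<longleftrightarrow> d dvd m \<and> coprime d n" for d
    unfolding D_def P_def using NT2[OF m0 n0] by simp
  have dpos: "d > 0" "m * n div d = (m div d) * n" "m * n div d > 0" if "d \<in> D" for d
  proof -
    have dm: "d dvd m" using that DD by simp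
    show "d > 0" using dm m0 by (simp add: dvd_pos_nat)
    have "n * (m div d) = n * m div d" by (rule div_mult_swap[OF dm])
    then show "m * n div d = (m div d) * n" by (simp only: mult.commute)
    moreover have "m div d > 0" using that DD m0 \<open>d > 0\<close> by (auto elim!: dvdE)
    ultimately show "m * n div d > 0" using n0 by simp
  qed
  define A where "A d = {x. per T (m * n div d) x}" for d
  have U: "{x. per (T ^^ m) n x} = (\<Union>d\<in>D. A d)"
  proof (intro set_eqI iffI)
    fix x assume x: "x \<in> {x. per (T ^^ m) n x}"
    then have "((T ^^ m) ^^ n) x = x" unfolding per_alt by auto
    then have fx: "(T ^^ (m * n)) x = x" by (simp add: funpow_mult)
    have mn: "m * n > 0" using m0 n0 by simp
    obtain k where k: "per T k x" using per_exists[OF mn fx] by blast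
    then have k0: "k > 0" unfolding per_def by simp
    have "\<forall>j. k dvd m * j \<longleftrightarrow> n dvd j" using x per_pow[OF k] by auto
    then obtain d where d: "d dvd m" "coprime d n" "k = (m div d) * n"
      using NT1[OF k0 m0 n0] by auto
    have "d \<in> D" using d DD by auto
    then have "x \<in> A d" unfolding A_def using k d dpos by simp
    then show "x \<in> (\<Union>d\<in>D. A d)" using \<open>d \<in> D\<close> by auto
  next
    fix x assume "x \<in> (\<Union>d\<in>D. A d)"
    then obtain d where d: "d \<in> D" "per T (m * n div d) x" unfolding A_def by auto
    have "\<forall>j. (m * n div d) dvd m * j \<longleftrightarrow> n dvd j"
      using NT1[OF dpos(3)[OF d(1)] m0 n0] DD d(1) dpos(2)[OF d(1)] by auto
    then show "x \<in> {x. per (T ^^ m) n x}" using per_pow[OF d(2)] n0 by auto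
  qed
  have finA: "finite (A d)" if "d \<in> D" for d
  proof -
    have "A d \<subseteq> fixed_points T (m * n div d)"
      unfolding A_def fixed_points_def per_alt by auto
    then show ?thesis using fin[of "m * n div d"] dpos(3)[OF that] finite_subset by auto
  qed
  have finD: "finite D"
  proof -
    have "P > 0" unfolding P_def by (rule prod_pos) (auto dest: in_prime_factors_imp_prime prime_gt_0_nat)
    then show ?thesis unfolding D_def by simp
  qed
  have finU: "finite {x. per (T ^^ m) n x}" unfolding U using finA finD by auto
  have "n * orbit_count (T ^^ m) n = card {x. per (T ^^ m) n x}"
    by (rule count_per[OF n0 finU])
  also have "\<dots> = (\<Sum>d\<in>D. card (A d))" unfolding U
  proof (rule card_UN_disjoint[OF finD])
    show "\<forall>i\<in>D. finite (A i)" using finA by auto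
    show "\<forall>i\<in>D. \<forall>j\<in>D. i \<noteq> j \<longrightarrow> A i \<inter> A j = {}"
    proof (intro ballI impI equals0I)
      fix i j x assume h0: "i \<in> D" "j \<in> D" "i \<noteq> j" "x \<in> A i \<inter> A j"
      then have h: "i \<in> D" "j \<in> D" "i \<noteq> j" "x \<in> A i" "x \<in> A j" by auto
      then have "m * n div i = m * n div j" unfolding A_def using per_unique by auto
      then have "m div i = m div j" using dpos(2)[OF h(1)] dpos(2)[OF h(2)] n0 by simp
      moreover have "m div (m div i) = i" using h(1) DD m0 by (simp add: ddself)
      moreover have "m div (m div j) = j" using h(2) DD m0 by (simp add: ddself)
      ultimately have "i = j" by metis
      then show False using h by simp
    qed
  qed
  also have "\<dots> = (\<Sum>d\<in>D. n * ((m div d) * orbit_count T (m * n div d)))"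
  proof (rule sum.cong[OF refl])
    fix d assume d: "d \<in> D"
    have "card (A d) = (m * n div d) * orbit_count T (m * n div d)"
      using count_per[OF dpos(3)[OF d] finA[OF d, unfolded A_def]] unfolding A_def by simp
    then show "card (A d) = n * ((m div d) * orbit_count T (m * n div d))"
      using dpos(2)[OF d] by simp
  qed
  also have "\<dots> = n * (\<Sum>d\<in>D. (m div d) * orbit_count T (m * n div d))"
    by (simp add: sum_distrib_left)
  finally have "orbit_count (T ^^ m) n = (\<Sum>d\<in>D. (m div d) * orbit_count T (m * n div d))"
    using n0 by simp
  then show ?thesis unfolding D_def P_def .
qed

end
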